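(* Let $A=\begin{pmatrix} a & b\\ c & d\end{pmatrix}$ be a positive $2\times 2$ matrix. Define the positive diagonal matrices \[ X=\begin{pmatrix} \sqrt{cd} & 0\\ 0 & \sqrt{ab}\end{pmatrix},\qquad Y=\begin{pmatrix} \left(a\sqrt{cd}+c\sqrt{ab}\right)^{-1} & 0\\ 0 & \left(b\sqrt{cd}+d\sqrt{ab}\right)^{-1}\end{pmatrix}. \] Then the alternate minimization sequence $(A^{(\ell)})_{\ell\ge 0}$ of $A$ converges to the doubly stochastic matrix \[ S(A)=XAY=\begin{pmatrix} \alpha & \beta\\ \beta & \alpha\end{pmatrix},\qquad \alpha=\frac{\sqrt{ad}}{\sqrt{ad}+\sqrt{bc}},\quad \beta=\frac{\sqrt{bc}}{\sqrt{ad}+\sqrt{bc}}. \]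
   Context: A positive matrix has all entries positive. For an $n\times n$ matrix $A=(a_{i,j})$ let $\mathrm{row}_i(A)=\sum_j a_{i,j}$ and $\mathrm{col}_j(A)=\sum_i a_{i,j}$. A matrix is doubly stochastic if all its row sums and all its column sums equal $1$. For positive $A$ let $X(A)=\mathrm{diag}(1/\mathrm{row}_1(A),\ldots,1/\mathrm{row}_n(A))$ and $Y(A)=\mathrm{diag}(1/\mathrm{col}_1(A),\ldots,1/\mathrm{col}_n(A))$. The alternate minimization sequence of $A$ is defined by $A^{(0)}=A$, $A^{(2k+1)}=A^{(2k)}\,Y(A^{(2k)})$ (column scaling) and $A^{(2k+2)}=X(A^{(2k+1)})\,A^{(2k+1)}$ (row scaling) for $k\ge 0$. *)

theory Defs
  imports "HOL-Analysis.Analysis"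
begin

definition positive_matrix :: "real^'n^'n \<Rightarrow> bool" where
  "positive_matrix A \<longleftrightarrow> (\<forall>i j. A $ i $ j > 0)"

definition row_sum :: "real^'n^'n \<Rightarrow> 'n \<Rightarrow> real" where
  "row_sum A i = (\<Sum>j\<in>UNIV. A $ i $ j)"

definition col_sum :: "real^'n^'n \<Rightarrow> 'n \<Rightarrow> real" where
  "col_sum A j = (\<Sum>i\<in>UNIV. A $ i $ j)"

definition doubly_stochastic :: "real^'n^'n \<Rightarrow> bool" where
  "doubly_stochastic A \<longleftrightarrow> (\<forall>i. row_sum A i = 1) \<and> (\<forall>j. col_sum A j = 1)"

definition diag_mat :: "(real^'n) \<Rightarrow> real^'n^'n" where
  "diag_mat v = (\<chi> i j. if i = j then v $ i else 0)"

definition Xscal :: "real^'n^'n \<Rightarrow> real^'n^'n" where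
  "Xscal A = diag_mat (\<chi> i. 1 / row_sum A i)"

definition Yscal :: "real^'n^'n \<Rightarrow> real^'n^'n" where
  "Yscal A = diag_mat (\<chi> j. 1 / col_sum A j)"

fun alt_min :: "real^'n^'n \<Rightarrow> nat \<Rightarrow> real^'n^'n" where
  "alt_min A 0 = A"
| "alt_min A (Suc l) =
     (if even l then alt_min A l ** Yscal (alt_min A l)
      else Xscal (alt_min A l) ** alt_min A l)"

end

theory Submission
  imports Defs
begin

definition mk2 :: "real \<Rightarrow> real \<Rightarrow> real \<Rightarrow> real \<Rightarrow> real^2^2" where
  "mk2 p q r s = (\<chi> i j. if i = 1 then (if j = 1 then p else q) else (if j = 1 then r else s))"

lemma mk2_nth[simp]: "mk2 p q r s $ 1 $ 1 = p" "mk2 p q r s $ 1 $ 2 = q"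
  "mk2 p q r s $ 2 $ 1 = r" "mk2 p q r s $ 2 $ 2 = s"
  by (simp_all add: mk2_def)

lemma mat2_eq: "(M::real^2^2) = N \<longleftrightarrow> M$1$1=N$1$1 \<and> M$1$2=N$1$2 \<and> M$2$1=N$2$1 \<and> M$2$2=N$2$2"
  by (auto simp: vec_eq_iff forall_2)

lemma mk2_mult: "mk2 p q r s  **  mk2 p2 q2 r2 s2 = mk2 (p * p2+q * r2) (p * q2+q * s2) (r * p2+s * r2) (r * q2+s * s2)"
  by (simp add: mat2_eq matrix_matrix_mult_def sum_2)

lemma diag_mk2: "diag_mat (v::real^2) = mk2 (v$1) 0 0 (v$2)"
  by (simp add: mat2_eq diag_mat_def)

lemma Yscal_mk2: "Yscal (mk2 p q r s) = mk2 (1/(p+r)) 0 0 (1/(q+s))"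
  by (simp add: Yscal_def diag_mk2 col_sum_def sum_2)

lemma Xscal_mk2: "Xscal (mk2 p q r s) = mk2 (1/(p+q)) 0 0 (1/(r+s))"
  by (simp add: Xscal_def diag_mk2 row_sum_def sum_2)

lemma tendsto_mk2: "p \<longlonglongrightarrow> p0 \<Longrightarrow> q \<longlonglongrightarrow> q0 \<Longrightarrow> r \<longlonglongrightarrow> r0 \<Longrightarrow> s \<longlonglongrightarrow> s0 \<Longrightarrow>
  (\<lambda>n. mk2 (p n) (q n) (r n) (s n)) \<longlonglongrightarrow> mk2 p0 q0 r0 s0"
  unfolding mk2_def
  by (intro tendsto_vec_lambda) (auto intro: tendsto_intros)


definition Fm :: "real \<Rightarrow> real \<Rightarrow> real^2^2" where
  "Fm t x = mk2 (t*x/(t*x+1)) (x/(x+t)) (1/(t*x+1)) (t/(x+t))"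
definition Gm :: "real \<Rightarrow> real \<Rightarrow> real^2^2" where
  "Gm t x = mk2 (t*x/(t*x+1)) (1/(t*x+1)) (x/(x+t)) (t/(x+t))"
definition hh :: "real \<Rightarrow> real \<Rightarrow> real" where
  "hh t x = (x+t)/(t*x+1)"

lemma hh_pos: "t > 0 \<Longrightarrow> x > 0 \<Longrightarrow> hh t x > 0"
  by (simp add: hh_def add_pos_pos)

lemma step_facts: assumes "t > 0" "x > 0"
  shows "t*x/(t*x+1) + x/(x+t) = x*(t*(x+t) + (t*x+1))/((t*x+1)*(x+t))"
    "1/(t*x+1) + t/(x+t) = (x+t+t*(t*x+1))/((t*x+1)*(x+t))"
    "t*hh t x + 1 = (t*(x+t) + (t*x+1))/(t*x+1)"
    "hh t x + t = (x+t+t*(t*x+1))/(t*x+1)"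
    "t*(x+t) + (t*x+1) > 0" "x+t+t*(t*x+1) > 0" "t*x+1 > 0" "x+t > 0"
proof -
  have p: "t*(x+t) + (t*x+1) > 0" "x+t+t*(t*x+1) > 0" "t*x+1 > 0" "x+t > 0"
    using assms by (auto intro!: add_pos_pos mult_pos_pos)
  then show "t*(x+t) + (t*x+1) > 0" "x+t+t*(t*x+1) > 0" "t*x+1 > 0" "x+t > 0" by auto
  show "t*x/(t*x+1) + x/(x+t) = x*(t*(x+t) + (t*x+1))/((t*x+1)*(x+t))"
    using p by (simp add: divide_simps; simp add: algebra_simps)
  show "1/(t*x+1) + t/(x+t) = (x+t+t*(t*x+1))/((t*x+1)*(x+t))"
    using p by (simp add: divide_simps)
  show "t*hh t x + 1 = (t*(x+t) + (t*x+1))/(t*x+1)"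
    using p by (simp add: hh_def divide_simps; simp add: algebra_simps)
  show "hh t x + t = (x+t+t*(t*x+1))/(t*x+1)"
    using p by (simp add: hh_def divide_simps; simp add: algebra_simps)
qed

lemma stepF: assumes "t > 0" "x > 0" shows "Xscal (Fm t x) ** Fm t x = Gm t (hh t x)"
  using step_facts[OF assms] assms
  unfolding Fm_def Gm_def Xscal_mk2 mk2_mult mat2_eq mk2_nth
  apply (simp only:)
  apply (simp add: hh_def)
  done

lemma stepG: assumes "t > 0" "x > 0" shows "Gm t x ** Yscal (Gm t x) = Fm t (hh t x)"
  using step_facts[OF assms] assms
  unfolding Fm_def Gm_def Yscal_mk2 mk2_mult mat2_eq mk2_nth
  apply (simp only:)
  apply (simp add: hh_def)
  done


lemma conv_if: "(e2::nat\<Rightarrow>real) \<longlonglongrightarrow> L \<Longrightarrow> e3 \<longlonglongrightarrow> L \<Longrightarrow> (\<lambda>n. if even n then e2 n else e3 n) \<longlonglongrightarrow> L"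
proof -
  assume h: "e2 \<longlonglongrightarrow> L" "e3 \<longlonglongrightarrow> L"
  have "(\<lambda>n. min (e2 n) (e3 n)) \<longlonglongrightarrow> L" "(\<lambda>n. max (e2 n) (e3 n)) \<longlonglongrightarrow> L"
    using tendsto_min[OF h] tendsto_max[OF h] by simp_all
  then show ?thesis
    by (rule tendsto_sandwich[rotated 2]) auto
qed

theorem theorem4:
  fixes A :: "real^2^2" and a b c d :: real
  assumes "A = (\<chi> i j. if i = 1 then (if j = 1 then a else b) else (if j = 1 then c else d))"
    and "positive_matrix A"
  defines "X \<equiv> diag_mat (\<chi> i. if i = 1 then sqrt (c  *  d) else sqrt (a  *  b)) :: real^2^2"
    and "Y \<equiv> diag_mat (\<chi> j. if j = 1 then 1 / (a  *  sqrt (c  *  d) + c  *  sqrt (a  *  b))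
                             else 1 / (b  *  sqrt (c  *  d) + d  *  sqrt (a  *  b))) :: real^2^2"
    and "\<alpha> \<equiv> sqrt (a  *  d) / (sqrt (a  *  d) + sqrt (b  *  c))"
    and "\<beta> \<equiv> sqrt (b  *  c) / (sqrt (a  *  d) + sqrt (b  *  c))"
  shows "alt_min A \<longlonglongrightarrow> X ** A ** Y
         \<and> X ** A ** Y = (\<chi> i j. if i = j then \<alpha> else \<beta>)
         \<and> doubly_stochastic (X ** A ** Y)"
proof -
  have Am: "A = mk2 a b c d" using assms(1) by (simp add: mk2_def)
  have pos: "a > 0" "b > 0" "c > 0" "d > 0"
    using assms(2) unfolding Am positive_matrix_def by (metis mk2_nth)+
  define sa where "sa = sqrt a"
  define sb where "sb = sqrt b"
  define sc where "sc = sqrt c"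
  define sd where "sd = sqrt d"
  have sp: "sa > 0" "sb > 0" "sc > 0" "sd > 0" using pos by (auto simp: sa_def sb_def sc_def sd_def)
  have sq: "a = sa^2" "b = sb^2" "c = sc^2" "d = sd^2" using pos by (auto simp: sa_def sb_def sc_def sd_def)
  have sm: "sqrt (a * d) = sa * sd" "sqrt (b * c) = sb * sc" "sqrt (c * d) = sc * sd" "sqrt (a * b) = sa * sb"
    by (simp_all add: sa_def sb_def sc_def sd_def real_sqrt_mult)
  define t where "t = (sa * sd)/(sb * sc)"
  have tp: "t > 0" using sp by (simp add: t_def)
  have al: "\<alpha> = t/(t+1)" "\<beta> = 1/(t+1)"
    using sp unfolding \<alpha>_def \<beta>_def t_def sm by (simp_all add: field_simps)
  have T: "(\<chi> i j. if i = j then \<alpha> else \<beta>) = mk2 \<alpha> \<beta> \<beta> \<alpha>"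
    by (simp add: mat2_eq)
  have d1: "a * (sc * sd) + c * (sa * sb) = sa * sc * (sa * sd + sb * sc)"
    and d2: "b * (sc * sd) + d * (sa * sb) = sb * sd * (sa * sd + sb * sc)"
    unfolding sq by (simp_all add: algebra_simps power2_eq_square)
  have nz: "sa * sd + sb * sc > 0" using sp by (simp add: add_pos_pos)
  have XAY: "X ** A ** Y = mk2 \<alpha> \<beta> \<beta> \<alpha>"
  proof -
    have "X ** A ** Y = mk2 (sc * sd * a/(a * (sc * sd)+c * (sa * sb))) (sc * sd * b/(b * (sc * sd)+d * (sa * sb)))
               (sa * sb * c/(a * (sc * sd)+c * (sa * sb))) (sa * sb * d/(b * (sc * sd)+d * (sa * sb)))"
      unfolding X_def Y_def Am diag_mk2 mk2_mult sm by (simp add: mat2_eq)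
    also have "\<dots> = mk2 \<alpha> \<beta> \<beta> \<alpha>"
      unfolding d1 d2 mat2_eq mk2_nth \<alpha>_def \<beta>_def sm using sp nz
      by (intro conjI; simp add: divide_simps; simp add: sq power2_eq_square algebra_simps)
    finally show ?thesis .
  qed
  have DS: "doubly_stochastic (mk2 \<alpha> \<beta> \<beta> \<alpha>)"
    unfolding doubly_stochastic_def row_sum_def col_sum_def forall_2 sum_2 mk2_nth al
    using tp by (simp add: field_simps)
  define s0 where "s0 = (sa * sb)/(sc * sd)"
  have s0p: "s0 > 0" using sp by (simp add: s0_def)
  define x where "x n = (hh t ^^ n) s0" for n
  have x0: "x 0 = s0" and xS: "x (Suc n) = hh t (x n)" for n by (simp_all add: x_def)
  have xp: "x n > 0" for n by (induction n) (simp_all add: x0 xS s0p hh_pos tp)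
  have base: "alt_min A 1 = Fm t s0"
  proof -
    have ts: "t * s0 = a/c" "s0/t = b/d" using sp unfolding t_def s0_def sq
      by (simp_all add: field_simps power2_eq_square)
    have e: "t * s0/(t * s0+1) = a/(a+c)" "s0/(s0+t) = b/(b+d)" "1/(t * s0+1) = c/(a+c)" "t/(s0+t) = d/(b+d)"
    proof -
      show "t * s0/(t * s0+1) = a/(a+c)" "1/(t * s0+1) = c/(a+c)" unfolding ts using pos by (simp_all add: field_simps)
      have "s0 = t * (b/d)" using ts(2) tp by (simp add: field_simps)
      then have q: "s0/(s0+t) = (t * (b/d))/(t * (b/d)+t)" "t/(s0+t) = t/(t * (b/d)+t)" by simp_all
      have bd: "b+d > 0" "b * t + d * t > 0" using pos tp by (simp_all add: add_pos_pos)
      show "s0/(s0+t) = b/(b+d)" unfolding q using tp pos bd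
        by (simp add: divide_simps; simp add: algebra_simps)
      show "t/(s0+t) = d/(b+d)" unfolding q using tp pos bd
        by (simp add: divide_simps; simp add: algebra_simps)
    qed
    show ?thesis unfolding Fm_def e using pos
      by (simp add: Am Yscal_mk2 mk2_mult mat2_eq)
  qed
  have closed: "alt_min A (Suc n) = (if even n then Fm t (x n) else Gm t (x n))" for n
  proof (induction n)
    case 0 then show ?case using base x0 by simp
  next
    case (Suc n)
    show ?case
    proof (cases "even n")
      case True
      then show ?thesis using Suc stepF[OF tp xp[of n]] by (simp add: xS)
    next
      case False
      then show ?thesis using Suc stepG[OF tp xp[of n]] by (simp add: xS)
    qed
  qed
  define lam where "lam = (1-t)/(1+t)"
  have lam: "\<bar>lam\<bar> < 1" using tp by (simp add: lam_def abs_less_iff field_simps)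
  have w: "(x n - 1)/(x n + 1) = lam^n  *  ((s0-1)/(s0+1))" for n
  proof (induction n)
    case 0 then show ?case by (simp add: x0)
  next
    case (Suc n)
    have p: "x n > 0" "t * x n + 1 > 0" using xp[of n] tp by (auto intro: add_pos_pos)
    have "(x (Suc n) - 1)/(x (Suc n) + 1) = lam  *  ((x n - 1)/(x n + 1))"
      using p tp unfolding xS hh_def lam_def by (simp add: divide_simps; simp add: algebra_simps)
    then show ?case using Suc by simp
  qed
  have xeq: "x n = (1 + lam^n  *  ((s0-1)/(s0+1))) / (1 - lam^n  *  ((s0-1)/(s0+1)))" for n
  proof -
    have p: "x n + 1 > 0" using xp[of n] by simp
    have "1 - (x n - 1)/(x n + 1) = 2/(x n + 1)" "1 + (x n - 1)/(x n + 1) = 2  *  x n/(x n + 1)"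
      using p by (simp_all add: field_simps)
    then show ?thesis unfolding w[symmetric] using p by (simp add: field_simps)
  qed
  have "(\<lambda>n. lam^n) \<longlonglongrightarrow> 0" using lam by (simp add: LIMSEQ_abs_realpow_zero2)
  then have "x \<longlonglongrightarrow> (1 + 0  *  ((s0-1)/(s0+1))) / (1 - 0  *  ((s0-1)/(s0+1)))"
    unfolding xeq by (intro tendsto_intros) (auto simp: lam)
  then have xl: "x \<longlonglongrightarrow> 1" by simp
  have e1: "(\<lambda>n. t * x n/(t * x n+1)) \<longlonglongrightarrow> \<alpha>" using xl tp unfolding al
    by (auto intro!: tendsto_eq_intros)
  have e2: "(\<lambda>n. x n/(x n+t)) \<longlonglongrightarrow> \<beta>" using xl tp unfolding al
    by (auto intro!: tendsto_eq_intros)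
  have e3: "(\<lambda>n. 1/(t * x n+1)) \<longlonglongrightarrow> \<beta>" using xl tp unfolding al
    by (auto intro!: tendsto_eq_intros)
  have e4: "(\<lambda>n. t/(x n+t)) \<longlonglongrightarrow> \<alpha>" using xl tp unfolding al
    by (auto intro!: tendsto_eq_intros)
  have cl2: "alt_min A (Suc n) = mk2 (t * x n/(t * x n+1)) (if even n then x n/(x n+t) else 1/(t * x n+1))
      (if even n then 1/(t * x n+1) else x n/(x n+t)) (t/(x n+t))" for n
    unfolding closed Fm_def Gm_def by simp
  have "(\<lambda>n. alt_min A (Suc n)) \<longlonglongrightarrow> mk2 \<alpha> \<beta> \<beta> \<alpha>"
    unfolding cl2 by (intro tendsto_mk2 e1 e4 conv_if e2 e3)
  then have "alt_min A \<longlonglongrightarrow> mk2 \<alpha> \<beta> \<beta> \<alpha>" by (rule LIMSEQ_imp_Suc)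
  then show ?thesis using XAY T DS by simp
qed

end
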